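(* Let $G_1,G_2$ be two connected graphs that are cospectral with respect to the Laplacian matrix. If $Z(G_1)\neq Z(G_2)$, then for every $r\geq 1$ the joins $G_1\vee K_r$ and $G_2\vee K_r$ are cospectral with respect to the Laplacian matrix and satisfy $Z(G_1\vee K_r)\neq Z(G_2\vee K_r)$. Likewise, if $Z_{-}(G_1)\neq Z_{-}(G_2)$, then for every $r\geq 1$ the joins $G_1\vee K_r$ and $G_2\vee K_r$ are Laplacian-cospectral and satisfy $Z_{-}(G_1\vee K_r)\neq Z_{-}(G_2\vee K_r)$.
   Context: Graphs are finite, simple, undirected. The Laplacian matrix of $G$ is $L=D-A$, with $D$ the diagonal degree matrix and $A$ the adjacency matrix; graphs are Laplacian-cospectral if their Laplacian matrices have the same multiset of eigenvalues. The join $G\vee H$ is the disjoint union of $G$ and $H$ together with all edges $\{u,v\}$, $u\in V(G)$, $v\in V(H)$. $K_r$ is the complete graph on $r$ vertices. The zero forcing number $Z(G)$ is the minimum size of a set $S\subseteq V(G)$ such that, if the vertices of $S$ are colored blue and all others white, repeated application of the rule "a blue vertex with exactly one white neighbor forces that neighbor to become blue" eventually makes every vertex blue. The skew zero forcing number $Z_{-}(G)$ is defined in the same way but with the rule "any vertex (blue or white) that has exactly one white neighbor forces that neighbor to become blue". *)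

theory Defs
  imports "Jordan_Normal_Form.Determinant" "Jordan_Normal_Form.Char_Poly"
          "HOL-Computational_Algebra.Computational_Algebra"
begin

definition simple_graph :: "nat \<Rightarrow> (nat \<Rightarrow> nat \<Rightarrow> bool) \<Rightarrow> bool" where
  "simple_graph n E \<longleftrightarrow> (\<forall>u v. E u v \<longrightarrow> u < n \<and> v < n) \<and>
     (\<forall>u v. E u v \<longrightarrow> E v u) \<and> (\<forall>u. \<not> E u u)"

definition connected_graph :: "nat \<Rightarrow> (nat \<Rightarrow> nat \<Rightarrow> bool) \<Rightarrow> bool" where
  "connected_graph n E \<longleftrightarrow> n > 0 \<and> (\<forall>u v. u < n \<longrightarrow> v < n \<longrightarrow> E\<^sup>*\<^sup>* u v)"

definition nbrs :: "nat \<Rightarrow> (nat \<Rightarrow> nat \<Rightarrow> bool) \<Rightarrow> nat \<Rightarrow> nat set" where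
  "nbrs n E u = {w. w < n \<and> E u w}"

definition laplacian :: "nat \<Rightarrow> (nat \<Rightarrow> nat \<Rightarrow> bool) \<Rightarrow> real mat" where
  "laplacian n E = mat n n (\<lambda>(i, j).
      (if i = j then real (card (nbrs n E i)) else 0) - (if E i j then 1 else 0))"

definition eigenvalues_mset :: "real mat \<Rightarrow> complex multiset" where
  "eigenvalues_mset A = proots (map_poly complex_of_real (char_poly A))"

definition laplacian_cospectral ::
  "nat \<Rightarrow> (nat \<Rightarrow> nat \<Rightarrow> bool) \<Rightarrow> nat \<Rightarrow> (nat \<Rightarrow> nat \<Rightarrow> bool) \<Rightarrow> bool" where
  "laplacian_cospectral n1 E1 n2 E2 \<longleftrightarrow>
     eigenvalues_mset (laplacian n1 E1) = eigenvalues_mset (laplacian n2 E2)"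

definition complete_graph_adj :: "nat \<Rightarrow> nat \<Rightarrow> nat \<Rightarrow> bool" where
  "complete_graph_adj r u v \<longleftrightarrow> u < r \<and> v < r \<and> u \<noteq> v"

text \<open>Join of (n1,E1) and (n2,E2): vertex set {0..<n1+n2}, second graph shifted by n1.
  The vertex count of the join is n1 + n2.\<close>
definition join_adj ::
  "nat \<Rightarrow> (nat \<Rightarrow> nat \<Rightarrow> bool) \<Rightarrow> nat \<Rightarrow> (nat \<Rightarrow> nat \<Rightarrow> bool) \<Rightarrow> nat \<Rightarrow> nat \<Rightarrow> bool" where
  "join_adj n1 E1 n2 E2 u v \<longleftrightarrow>
     (u < n1 \<and> v < n1 \<and> E1 u v) \<or>
     (n1 \<le> u \<and> n1 \<le> v \<and> u < n1 + n2 \<and> v < n1 + n2 \<and> E2 (u - n1) (v - n1)) \<or>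
     (u < n1 \<and> n1 \<le> v \<and> v < n1 + n2) \<or>
     (v < n1 \<and> n1 \<le> u \<and> u < n1 + n2)"

inductive_set zf_closure :: "nat \<Rightarrow> (nat \<Rightarrow> nat \<Rightarrow> bool) \<Rightarrow> nat set \<Rightarrow> nat set"
  for n E S where
  init: "v \<in> S \<Longrightarrow> v < n \<Longrightarrow> v \<in> zf_closure n E S"
| force: "u \<in> zf_closure n E S \<Longrightarrow> w \<in> nbrs n E u \<Longrightarrow>
          (\<forall>x \<in> nbrs n E u. x \<noteq> w \<longrightarrow> x \<in> zf_closure n E S) \<Longrightarrow> w \<in> zf_closure n E S"

inductive_set szf_closure :: "nat \<Rightarrow> (nat \<Rightarrow> nat \<Rightarrow> bool) \<Rightarrow> nat set \<Rightarrow> nat set"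
  for n E S where
  init: "v \<in> S \<Longrightarrow> v < n \<Longrightarrow> v \<in> szf_closure n E S"
| force: "u < n \<Longrightarrow> w \<in> nbrs n E u \<Longrightarrow>
          (\<forall>x \<in> nbrs n E u. x \<noteq> w \<longrightarrow> x \<in> szf_closure n E S) \<Longrightarrow> w \<in> szf_closure n E S"

definition zero_forcing_number :: "nat \<Rightarrow> (nat \<Rightarrow> nat \<Rightarrow> bool) \<Rightarrow> nat" where
  "zero_forcing_number n E =
     (LEAST k. \<exists>S. S \<subseteq> {..<n} \<and> card S = k \<and> zf_closure n E S = {..<n})"

definition skew_zero_forcing_number :: "nat \<Rightarrow> (nat \<Rightarrow> nat \<Rightarrow> bool) \<Rightarrow> nat" where
  "skew_zero_forcing_number n E =
     (LEAST k. \<exists>S. S \<subseteq> {..<n} \<and> card S = k \<and> szf_closure n E S = {..<n})"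

end

theory Submission imports Defs begin


lemma charpoly_eval:
  assumes "(A :: real mat) \<in> carrier_mat n n"
  shows "poly (char_poly A) k = det (mat n n (\<lambda>(i,j). (if i = j then k else 0) - A $$ (i,j)))"
proof -
  have "- char_matrix A k = mat n n (\<lambda>(i,j). (if i = j then k else 0) - A $$ (i,j))"
    using assms by (auto simp: char_matrix_def)
  then show ?thesis using char_poly_matrix[OF assms] by simp
qed

lemma sumQ:
  fixes f :: "nat \<Rightarrow> real"
  assumes "j < N" "n \<le> N"
  shows "(\<Sum>k<N. f k * (if k = j then 1 else if k < n \<and> n \<le> j then c else 0))
     = f j + (if n \<le> j then c * (\<Sum>k<n. f k) else 0)"
proof -
  have "(\<Sum>k<N. f k * (if k = j then 1 else if k < n \<and> n \<le> j then c else 0))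
      = (\<Sum>k<N. (if k = j then f k else 0) + (if n \<le> j then (if k < n then c * f k else 0) else 0))"
    by (rule sum.cong) auto
  also have "\<dots> = f j + (if n \<le> j then (\<Sum>k<N. if k < n then c * f k else 0) else 0)"
    using assms by (simp add: sum.distrib)
  also have "(\<Sum>k<N. if k < n then c * f k else 0) = (\<Sum>k<n. c * f k)"
  proof -
    have "{..<N} \<inter> {k. k < n} = {..<n}" using assms by auto
    then show ?thesis by (simp add: sum.If_cases)
  qed
  finally show ?thesis by (simp add: sum_distrib_left)
qed

lemma sum_ind_card: "(\<Sum>k<n. if E i k then 1 else 0 :: real) = real (card (nbrs n E i))"
  unfolding nbrs_def by (simp add: sum.If_cases Int_def lessThan_def)

abbreviation JW :: "nat \<Rightarrow> (nat \<Rightarrow> nat \<Rightarrow> bool) \<Rightarrow> nat \<Rightarrow> nat \<Rightarrow> nat \<Rightarrow> bool" where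
  "JW n E r \<equiv> join_adj n E r (complete_graph_adj r)"

lemma JW_lo: assumes "simple_graph n E" "u < n"
  shows "JW n E r u v \<longleftrightarrow> (v < n \<and> E u v) \<or> (n \<le> v \<and> v < n + r)"
  using assms unfolding join_adj_def simple_graph_def complete_graph_adj_def by auto

lemma JW_hi: assumes "n \<le> u" "u < n + r"
  shows "JW n E r u v \<longleftrightarrow> v < n + r \<and> v \<noteq> u"
  using assms unfolding join_adj_def simple_graph_def complete_graph_adj_def by auto

lemma nbrs_JW_lo: assumes "simple_graph n E" "u < n"
  shows "nbrs (n + r) (JW n E r) u = nbrs n E u \<union> {n..<n+r}"
  using JW_lo[OF assms] unfolding nbrs_def by auto

lemma nbrs_JW_hi: assumes "n \<le> u" "u < n + r"
  shows "nbrs (n + r) (JW n E r) u = {..<n+r} - {u}"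
  using JW_hi[OF assms] unfolding nbrs_def by auto

lemma card_nbrs_lo: assumes "simple_graph n E" "u < n"
  shows "card (nbrs (n + r) (JW n E r) u) = card (nbrs n E u) + r"
proof -
  have "nbrs n E u \<subseteq> {..<n}" unfolding nbrs_def by auto
  then have "nbrs n E u \<inter> {n..<n+r} = {}" by auto
  moreover have "finite (nbrs n E u)" unfolding nbrs_def by auto
  ultimately show ?thesis unfolding nbrs_JW_lo[OF assms] by (simp add: card_Un_disjoint)
qed

lemma card_nbrs_hi: assumes "n \<le> u" "u < n + r"
  shows "card (nbrs (n + r) (JW n E r) u) = n + r - 1"
  unfolding nbrs_JW_hi[OF assms] using assms by simp

definition Dm :: "nat \<Rightarrow> nat \<Rightarrow> real \<Rightarrow> real mat" where
  "Dm n r t = mat r r (\<lambda>(i,j). (if i = j then t - real (n + r - 1) else 1) - real n / (t - real r))"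

lemma join_charpoly:
  assumes sg: "simple_graph n E" and tr: "t \<noteq> real r"
  shows "poly (char_poly (laplacian (n + r) (JW n E r))) t
         = poly (char_poly (laplacian n E)) (t - real r) * det (Dm n r t)"
proof -
  define N where "N = n + r"
  define M where "M = laplacian N (JW n E r)"
  define A where "A = laplacian n E"
  define X where "X = mat N N (\<lambda>(i,j). (if i = j then t else 0) - M $$ (i,j))"
  define B where "B = mat n n (\<lambda>(i,j). (if i = j then t - real r else 0) - A $$ (i,j))"
  define c where "c = - 1 / (t - real r)"
  define Q where "Q = mat N N (\<lambda>(i,j). if i = j then 1 else if i < n \<and> n \<le> j then c else (0::real))"
  define C where "C = mat r n (\<lambda>_. 1::real)"
  have M: "M \<in> carrier_mat N N" unfolding M_def laplacian_def by simp
  have A: "A \<in> carrier_mat n n" unfolding A_def laplacian_def by simp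
  have X: "X \<in> carrier_mat N N" unfolding X_def by simp
  have Qc: "Q \<in> carrier_mat N N" unfolding Q_def by simp
  have pM: "poly (char_poly M) t = det X" unfolding X_def by (rule charpoly_eval[OF M])
  have pA: "poly (char_poly A) (t - real r) = det B" unfolding B_def by (rule charpoly_eval[OF A])
  have dQ: "det Q = 1"
  proof -
    have "upper_triangular Q" unfolding upper_triangular_def Q_def by auto
    then have "det Q = prod_list (diag_mat Q)" using det_upper_triangular Qc by blast
    also have "\<dots> = 1"
    proof -
      have "map (\<lambda>i. Q $$ (i,i)) [0..<N] = map (\<lambda>i. 1) [0..<N]" by (auto simp: Q_def)
      then show ?thesis unfolding diag_mat_def using Qc by (simp add: map_replicate_const)
    qed
    finally show ?thesis .
  qed
  have Xlo: "X $$ (i,j) = B $$ (i,j)" if "i < n" "j < n" for i j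
    using that card_nbrs_lo[OF sg, of i r] JW_lo[OF sg, of i r j]
    unfolding X_def B_def M_def A_def N_def laplacian_def by auto
  have Xlh: "X $$ (i,j) = 1" if "i < n" "n \<le> j" "j < N" for i j
    using that JW_lo[OF sg, of i r j]
    unfolding X_def M_def N_def laplacian_def by auto
  have Xhl: "X $$ (i,j) = 1" if "n \<le> i" "i < N" "j < n" for i j
    using that JW_hi[of n i r E j]
    unfolding X_def M_def N_def laplacian_def by auto
  have Xhh: "X $$ (i,j) = (if i = j then t - real (n + r - 1) else 1)" if "n \<le> i" "i < N" "n \<le> j" "j < N" for i j
    using that JW_hi[of n i r E j] card_nbrs_hi[of n i r E]
    unfolding X_def M_def N_def laplacian_def by auto
  have rs_lo: "(\<Sum>k<n. X $$ (i,k)) = t - real r" if "i < n" for i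
  proof -
    have "(\<Sum>k<n. X $$ (i,k)) = (\<Sum>k<n. (if k = i then t - real r - real (card (nbrs n E i)) else 0) + (if E i k then 1 else 0))"
      using that by (intro sum.cong) (auto simp: Xlo B_def A_def laplacian_def)
    also have "\<dots> = t - real r - real (card (nbrs n E i)) + real (card (nbrs n E i))"
      using that by (simp add: sum.distrib sum_ind_card)
    finally show ?thesis by simp
  qed
  have rs_hi: "(\<Sum>k<n. X $$ (i,k)) = real n" if "n \<le> i" "i < N" for i
    using that by (simp add: Xhl)
  have XQ: "X * Q = four_block_mat B (0\<^sub>m n r) C (Dm n r t)"
  proof (rule eq_matI)
    fix i j assume i: "i < dim_row (four_block_mat B (0\<^sub>m n r) C (Dm n r t))"
      and j: "j < dim_col (four_block_mat B (0\<^sub>m n r) C (Dm n r t))"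
    then have iN: "i < N" and jN: "j < N" by (auto simp: B_def Dm_def N_def)
    have e: "(X * Q) $$ (i,j) = X $$ (i,j) + (if n \<le> j then c * (\<Sum>k<n. X $$ (i,k)) else 0)"
    proof -
      have "(X * Q) $$ (i,j) = (\<Sum>k<N. X $$ (i,k) * (if k = j then 1 else if k < n \<and> n \<le> j then c else 0))"
        using iN jN X Qc apply (simp add: scalar_prod_def row_def col_def atLeast0LessThan)
        apply (rule sum.cong[OF refl])
        apply (auto simp: Q_def)
        done
      also have "\<dots> = X $$ (i,j) + (if n \<le> j then c * (\<Sum>k<n. X $$ (i,k)) else 0)"
        by (rule sumQ) (use jN N_def in auto)
      finally show ?thesis .
    qed
    show "(X * Q) $$ (i,j) = four_block_mat B (0\<^sub>m n r) C (Dm n r t) $$ (i,j)"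
    proof (cases "i < n"; cases "j < n")
      assume "i < n" "j < n" then show ?thesis unfolding e using Xlo by (simp add: B_def)
    next
      assume a: "i < n" "\<not> j < n"
      then have "(X * Q) $$ (i,j) = 1 + c * (t - real r)" unfolding e using Xlh rs_lo jN by simp
      also have "\<dots> = 0" using tr by (simp add: c_def)
      finally show ?thesis using a jN by (simp add: B_def N_def C_def Dm_def)
    next
      assume a: "\<not> i < n" "j < n"
      then show ?thesis unfolding e using Xhl iN by (simp add: B_def C_def N_def Dm_def)
    next
      assume a: "\<not> i < n" "\<not> j < n"
      then show ?thesis unfolding e using Xhh rs_hi iN jN
        by (auto simp: B_def Dm_def N_def c_def)
    qed
  qed (auto simp: X_def Q_def B_def Dm_def N_def)
  have "det X = det (X * Q)" using det_mult[OF X Qc] dQ by simp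
  also have "\<dots> = det B * det (Dm n r t)" unfolding XQ
    by (rule det_four_block_mat_upper_right_zero) (auto simp: B_def C_def Dm_def)
  finally show ?thesis using pM pA unfolding M_def A_def N_def by simp
qed


lemma lap_carrier: "laplacian n E \<in> carrier_mat n n"
  unfolding laplacian_def by simp

lemma cospec_imp:
  assumes "laplacian_cospectral n1 E1 n2 E2"
  shows "n1 = n2 \<and> char_poly (laplacian n1 E1) = char_poly (laplacian n2 E2)"
proof -
  define p1 where "p1 = char_poly (laplacian n1 E1)"
  define p2 where "p2 = char_poly (laplacian n2 E2)"
  have d1: "degree p1 = n1 \<and> coeff p1 n1 = 1" unfolding p1_def by (rule degree_monic_char_poly[OF lap_carrier])
  have d2: "degree p2 = n2 \<and> coeff p2 n2 = 1" unfolding p2_def by (rule degree_monic_char_poly[OF lap_carrier])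
  define q1 where "q1 = map_poly complex_of_real p1"
  define q2 where "q2 = map_poly complex_of_real p2"
  have e: "proots q1 = proots q2" using assms
    unfolding laplacian_cospectral_def eigenvalues_mset_def q1_def q2_def p1_def p2_def .
  have dq1: "degree q1 = n1" unfolding q1_def using d1 by (simp add: degree_map_poly)
  have dq2: "degree q2 = n2" unfolding q2_def using d2 by (simp add: degree_map_poly)
  have l1: "lead_coeff q1 = 1" using dq1 d1 unfolding q1_def by (simp add: coeff_map_poly)
  have l2: "lead_coeff q2 = 1" using dq2 d2 unfolding q2_def by (simp add: coeff_map_poly)
  have n: "n1 = n2" using size_proots_complex[of q1] size_proots_complex[of q2] e dq1 dq2 by simp
  have "q1 = q2"
    using complex_poly_decompose_multiset[of q1] complex_poly_decompose_multiset[of q2] e l1 l2 by simp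
  then have "p1 = p2" unfolding q1_def q2_def
    by (metis coeff_map_poly of_real_0 of_real_eq_iff poly_eqI)
  with n show ?thesis unfolding p1_def p2_def by simp
qed

lemma poly_eq_cofinite:
  fixes p q :: "real poly"
  assumes "\<And>t. t \<noteq> a \<Longrightarrow> poly p t = poly q t"
  shows "p = q"
proof (rule ccontr)
  assume "p \<noteq> q"
  then have "p - q \<noteq> 0" by simp
  then have f: "finite {x. poly (p - q) x = 0}" by (rule poly_roots_finite)
  have "UNIV - {a} \<subseteq> {x. poly (p - q) x = 0}" using assms by auto
  then have "finite (UNIV - {a} :: real set)" using f finite_subset by blast
  then have "finite (insert a (UNIV - {a}) :: real set)" by simp
  then have "finite (UNIV :: real set)" by (simp add: insert_UNIV)
  then show False using infinite_UNIV_char_0[where 'a=real] by simp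
qed

lemma join_cospectral:
  assumes "simple_graph n1 E1" "simple_graph n2 E2" "laplacian_cospectral n1 E1 n2 E2"
  shows "laplacian_cospectral (n1 + r) (JW n1 E1 r) (n2 + r) (JW n2 E2 r)"
proof -
  from cospec_imp[OF assms(3)] have n: "n1 = n2" and cp: "char_poly (laplacian n1 E1) = char_poly (laplacian n2 E2)" by auto
  have "char_poly (laplacian (n1 + r) (JW n1 E1 r)) = char_poly (laplacian (n2 + r) (JW n2 E2 r))"
    proof (rule poly_eq_cofinite[of "real r"])
    fix t :: real assume "t \<noteq> real r"
    then show "poly (char_poly (laplacian (n1 + r) (JW n1 E1 r))) t = poly (char_poly (laplacian (n2 + r) (JW n2 E2 r))) t"
      using join_charpoly[OF assms(1)] join_charpoly[OF assms(2)] cp n by simp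
  qed
  then show ?thesis unfolding laplacian_cospectral_def eigenvalues_mset_def by simp
qed



lemma zf_sub: "zf_closure n E S \<subseteq> {..<n}"
proof
  fix x assume "x \<in> zf_closure n E S" then show "x \<in> {..<n}"
    by induction (auto simp: nbrs_def)
qed

lemma szf_sub: "szf_closure n E S \<subseteq> {..<n}"
proof
  fix x assume "x \<in> szf_closure n E S" then show "x \<in> {..<n}"
    by induction (auto simp: nbrs_def)
qed

lemma zf_mono: assumes "S \<subseteq> S'" shows "zf_closure n E S \<subseteq> zf_closure n E S'"
proof
  fix x assume "x \<in> zf_closure n E S" then show "x \<in> zf_closure n E S'"
    by induction (use assms in \<open>auto intro: zf_closure.intros\<close>)
qed

lemma szf_mono: assumes "S \<subseteq> S'" shows "szf_closure n E S \<subseteq> szf_closure n E S'"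
proof
  fix x assume "x \<in> szf_closure n E S" then show "x \<in> szf_closure n E S'"
    by induction (use assms in \<open>auto intro: szf_closure.intros\<close>)
qed

lemma zf_absorb: assumes "S' \<subseteq> zf_closure n E S" shows "zf_closure n E S' \<subseteq> zf_closure n E S"
proof
  fix x assume "x \<in> zf_closure n E S'" then show "x \<in> zf_closure n E S"
    by induction (use assms in \<open>auto intro: zf_closure.intros\<close>)
qed

lemma szf_absorb: assumes "S' \<subseteq> szf_closure n E S" shows "szf_closure n E S' \<subseteq> szf_closure n E S"
proof
  fix x assume "x \<in> szf_closure n E S'" then show "x \<in> szf_closure n E S"
    by induction (use assms in \<open>auto intro: szf_closure.intros\<close>)
qed

lemma zf_cong: assumes "nbrs n E = nbrs n E'" shows "zf_closure n E S \<subseteq> zf_closure n E' S"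
proof
  fix x assume "x \<in> zf_closure n E S" then show "x \<in> zf_closure n E' S"
    by induction (use assms in \<open>auto intro: zf_closure.intros\<close>)
qed

lemma szf_cong: assumes "nbrs n E = nbrs n E'" shows "szf_closure n E S \<subseteq> szf_closure n E' S"
proof
  fix x assume "x \<in> szf_closure n E S" then show "x \<in> szf_closure n E' S"
    by induction (use assms in \<open>auto intro: szf_closure.intros\<close>)
qed

definition has_nbr :: "nat \<Rightarrow> (nat \<Rightarrow> nat \<Rightarrow> bool) \<Rightarrow> bool" where
  "has_nbr n E \<longleftrightarrow> (\<forall>v<n. \<exists>x. E v x)"

lemma conn_has_nbr:
  assumes sg: "simple_graph n E" and c: "connected_graph n E" and n: "2 \<le> n"
  shows "has_nbr n E"
  unfolding has_nbr_def
proof (intro allI impI)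
  fix v assume v: "v < n"
  define w where "w = (if v = 0 then 1 else (0::nat))"
  have w: "w < n" "w \<noteq> v" using n v unfolding w_def by auto
  have "E\<^sup>*\<^sup>* v w" using c v w unfolding connected_graph_def by auto
  then show "\<exists>x. E v x" using w(2) by (cases rule: converse_rtranclpE) auto
qed

lemma nbr_in: assumes "simple_graph n E" "E v x" shows "x < n" "v < n" "x \<noteq> v" "x \<in> nbrs n E v"
  using assms unfolding simple_graph_def nbrs_def by auto

lemma zf_last:
  assumes sg: "simple_graph n E" and hn: "has_nbr n E" and w: "w < n"
    and sub: "{..<n} - {w} \<subseteq> zf_closure n E S"
  shows "w \<in> zf_closure n E S"
proof -
  obtain v where "E w v" using hn w unfolding has_nbr_def by auto
  then have v: "E v w" using sg unfolding simple_graph_def by auto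
  note vi = nbr_in[OF sg v]
  show ?thesis
  proof (rule zf_closure.force[of v])
    show "v \<in> zf_closure n E S" using sub vi by auto
    show "w \<in> nbrs n E v" using vi by auto
    show "\<forall>x\<in>nbrs n E v. x \<noteq> w \<longrightarrow> x \<in> zf_closure n E S" using sub by (auto simp: nbrs_def)
  qed
qed

lemma szf_last:
  assumes sg: "simple_graph n E" and hn: "has_nbr n E" and w: "w < n"
    and sub: "{..<n} - {w} \<subseteq> szf_closure n E S"
  shows "w \<in> szf_closure n E S"
proof -
  obtain v where "E w v" using hn w unfolding has_nbr_def by auto
  then have v: "E v w" using sg unfolding simple_graph_def by auto
  note vi = nbr_in[OF sg v]
  show ?thesis
  proof (rule szf_closure.force[of v])
    show "v < n" using vi by auto
    show "w \<in> nbrs n E v" using vi by auto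
    show "\<forall>x\<in>nbrs n E v. x \<noteq> w \<longrightarrow> x \<in> szf_closure n E S" using sub by (auto simp: nbrs_def)
  qed
qed




lemma lemA_zf:
  assumes sg: "simple_graph n E" and hn: "has_nbr n E" and K: "{n..<n+r} \<subseteq> S"
    and full: "zf_closure (n+r) (JW n E r) S = {..<n+r}"
  shows "zf_closure n E (S \<inter> {..<n}) = {..<n}"
proof -
  let ?C = "zf_closure n E (S \<inter> {..<n})"
  have main: "x \<in> ?C \<union> {n..<n+r}" if "x \<in> zf_closure (n+r) (JW n E r) S" for x
    using that
  proof induction
    case (init v)
    show ?case
    proof (cases "v < n")
      case True then have "v \<in> ?C" using init by (intro zf_closure.init) auto
      then show ?thesis by blast
    next
      case False then show ?thesis using init by simp
    qed
  next
    case (force u w)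
    have all: "x \<in> ?C \<union> {n..<n+r}" if "x \<in> nbrs (n+r) (JW n E r) u" "x \<noteq> w" for x
      using force(4) that by blast
    have wN: "w < n + r" using force(2) by (simp add: nbrs_def)
    have uN: "u < n + r" using force(1) zf_sub by blast
    show ?case
    proof (cases "w < n")
      case False then show ?thesis using wN by simp
    next
      case wn: True
      show ?thesis
      proof (cases "u < n")
        case un: True
        have "w \<in> ?C"
        proof (rule zf_closure.force[of u])
          show "u \<in> ?C" using force(3) un by simp
          show "w \<in> nbrs n E u" using force(2) wn nbrs_JW_lo[OF sg un] by simp
          show "\<forall>x\<in>nbrs n E u. x \<noteq> w \<longrightarrow> x \<in> ?C"
          proof (intro ballI impI)
            fix x assume x: "x \<in> nbrs n E u" "x \<noteq> w"
            then have "x \<in> nbrs (n+r) (JW n E r) u" using nbrs_JW_lo[OF sg un, of r] by simp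
            then have "x \<in> ?C \<union> {n..<n+r}" using all x by blast
            moreover have "x < n" using x by (simp add: nbrs_def)
            ultimately show "x \<in> ?C" by simp
          qed
        qed
        then show ?thesis by blast
      next
        case un: False
        have "{..<n} - {w} \<subseteq> ?C"
        proof
          fix x assume x: "x \<in> {..<n} - {w}"
          then have "x \<in> nbrs (n+r) (JW n E r) u" using nbrs_JW_hi[of n u r E] un uN by simp
          then have "x \<in> ?C \<union> {n..<n+r}" using all x by blast
          then show "x \<in> ?C" using x by simp
        qed
        then show ?thesis using zf_last[OF sg hn wn] by blast
      qed
    qed
  qed
  show ?thesis
  proof
    show "?C \<subseteq> {..<n}" by (rule zf_sub)
    show "{..<n} \<subseteq> ?C"
    proof
      fix x assume x: "x \<in> {..<n}"
      then have "x \<in> zf_closure (n+r) (JW n E r) S" using full by simp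
      then have "x \<in> ?C \<union> {n..<n+r}" by (rule main)
      then show "x \<in> ?C" using x by simp
    qed
  qed
qed

lemma lemA_szf:
  assumes sg: "simple_graph n E" and hn: "has_nbr n E" and K: "{n..<n+r} \<subseteq> S"
    and full: "szf_closure (n+r) (JW n E r) S = {..<n+r}"
  shows "szf_closure n E (S \<inter> {..<n}) = {..<n}"
proof -
  let ?C = "szf_closure n E (S \<inter> {..<n})"
  have main: "x \<in> ?C \<union> {n..<n+r}" if "x \<in> szf_closure (n+r) (JW n E r) S" for x
    using that
  proof induction
    case (init v)
    show ?case
    proof (cases "v < n")
      case True then have "v \<in> ?C" using init by (intro szf_closure.init) auto
      then show ?thesis by blast
    next
      case False then show ?thesis using init by simp
    qed
  next
    case (force u w)
    have all: "x \<in> ?C \<union> {n..<n+r}" if "x \<in> nbrs (n+r) (JW n E r) u" "x \<noteq> w" for x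
      using force(3) that by blast
    have wN: "w < n + r" using force(2) by (simp add: nbrs_def)
    have uN: "u < n + r" using force(1) by blast
    show ?case
    proof (cases "w < n")
      case False then show ?thesis using wN by simp
    next
      case wn: True
      show ?thesis
      proof (cases "u < n")
        case un: True
        have "w \<in> ?C"
        proof (rule szf_closure.force[of u])
          show "u < n" using un .
          show "w \<in> nbrs n E u" using force(2) wn nbrs_JW_lo[OF sg un] by simp
          show "\<forall>x\<in>nbrs n E u. x \<noteq> w \<longrightarrow> x \<in> ?C"
          proof (intro ballI impI)
            fix x assume x: "x \<in> nbrs n E u" "x \<noteq> w"
            then have "x \<in> nbrs (n+r) (JW n E r) u" using nbrs_JW_lo[OF sg un, of r] by simp
            then have "x \<in> ?C \<union> {n..<n+r}" using all x by blast
            moreover have "x < n" using x by (simp add: nbrs_def)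
            ultimately show "x \<in> ?C" by simp
          qed
        qed
        then show ?thesis by blast
      next
        case un: False
        have "{..<n} - {w} \<subseteq> ?C"
        proof
          fix x assume x: "x \<in> {..<n} - {w}"
          then have "x \<in> nbrs (n+r) (JW n E r) u" using nbrs_JW_hi[of n u r E] un uN by simp
          then have "x \<in> ?C \<union> {n..<n+r}" using all x by blast
          then show "x \<in> ?C" using x by simp
        qed
        then show ?thesis using szf_last[OF sg hn wn] by blast
      qed
    qed
  qed
  show ?thesis
  proof
    show "?C \<subseteq> {..<n}" by (rule szf_sub)
    show "{..<n} \<subseteq> ?C"
    proof
      fix x assume x: "x \<in> {..<n}"
      then have "x \<in> szf_closure (n+r) (JW n E r) S" using full by simp
      then have "x \<in> ?C \<union> {n..<n+r}" by (rule main)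
      then show "x \<in> ?C" using x by simp
    qed
  qed
qed

lemma upper_zf:
  assumes sg: "simple_graph n E" and full: "zf_closure n E T = {..<n}"
  shows "zf_closure (n+r) (JW n E r) (T \<union> {n..<n+r}) = {..<n+r}"
proof -
  let ?D = "zf_closure (n+r) (JW n E r) (T \<union> {n..<n+r})"
  have K: "{n..<n+r} \<subseteq> ?D"
  proof
    fix x assume "x \<in> {n..<n+r}" then show "x \<in> ?D" by (intro zf_closure.init) auto
  qed
  have main: "x \<in> ?D" if "x \<in> zf_closure n E T" for x
    using that
  proof induction
    case (init v) then show ?case by (intro zf_closure.init) auto
  next
    case (force u w)
    have un: "u < n" using force(1) zf_sub by blast
    show ?case
    proof (rule zf_closure.force[of u])
      show "u \<in> ?D" using force(3) .
      show "w \<in> nbrs (n+r) (JW n E r) u" using force(2) nbrs_JW_lo[OF sg un] by simp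
      show "\<forall>x\<in>nbrs (n+r) (JW n E r) u. x \<noteq> w \<longrightarrow> x \<in> ?D"
      proof (intro ballI impI)
        fix x assume x: "x \<in> nbrs (n+r) (JW n E r) u" "x \<noteq> w"
        then have "x \<in> nbrs n E u \<or> x \<in> {n..<n+r}" using nbrs_JW_lo[OF sg un, of r] by simp
        then show "x \<in> ?D" using force(4) x(2) K by blast
      qed
    qed
  qed
  show ?thesis
  proof
    show "?D \<subseteq> {..<n+r}" by (rule zf_sub)
    show "{..<n+r} \<subseteq> ?D"
    proof
      fix x assume x: "x \<in> {..<n+r}"
      show "x \<in> ?D"
      proof (cases "x < n")
        case True then show ?thesis using main full by simp
      next
        case False then show ?thesis using K x by auto
      qed
    qed
  qed
qed

lemma upper_szf:
  assumes sg: "simple_graph n E" and full: "szf_closure n E T = {..<n}"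
  shows "szf_closure (n+r) (JW n E r) (T \<union> {n..<n+r}) = {..<n+r}"
proof -
  let ?D = "szf_closure (n+r) (JW n E r) (T \<union> {n..<n+r})"
  have K: "{n..<n+r} \<subseteq> ?D"
  proof
    fix x assume "x \<in> {n..<n+r}" then show "x \<in> ?D" by (intro szf_closure.init) auto
  qed
  have main: "x \<in> ?D" if "x \<in> szf_closure n E T" for x
    using that
  proof induction
    case (init v) then show ?case by (intro szf_closure.init) auto
  next
    case (force u w)
    have un: "u < n" using force(1) .
    show ?case
    proof (rule szf_closure.force[of u])
      show "u < n + r" using un by simp
      show "w \<in> nbrs (n+r) (JW n E r) u" using force(2) nbrs_JW_lo[OF sg un] by simp
      show "\<forall>x\<in>nbrs (n+r) (JW n E r) u. x \<noteq> w \<longrightarrow> x \<in> ?D"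
      proof (intro ballI impI)
        fix x assume x: "x \<in> nbrs (n+r) (JW n E r) u" "x \<noteq> w"
        then have "x \<in> nbrs n E u \<or> x \<in> {n..<n+r}" using nbrs_JW_lo[OF sg un, of r] by simp
        then show "x \<in> ?D" using force(3) x(2) K by blast
      qed
    qed
  qed
  show ?thesis
  proof
    show "?D \<subseteq> {..<n+r}" by (rule szf_sub)
    show "{..<n+r} \<subseteq> ?D"
    proof
      fix x assume x: "x \<in> {..<n+r}"
      show "x \<in> ?D"
      proof (cases "x < n")
        case True then show ?thesis using main full by simp
      next
        case False then show ?thesis using K x by auto
      qed
    qed
  qed
qed

lemma card_split:
  fixes n r :: nat
  assumes "S \<subseteq> {..<n+r}"
  shows "card S = card (S \<inter> {..<n}) + card (S \<inter> {n..<n+r})"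
proof -
  have e: "S = (S \<inter> {..<n}) \<union> (S \<inter> {n..<n+r})" using assms by auto
  have fin: "finite S" using assms finite_subset by blast
  have "card ((S \<inter> {..<n}) \<union> (S \<inter> {n..<n+r})) = card (S \<inter> {..<n}) + card (S \<inter> {n..<n+r})"
    by (rule card_Un_disjoint) (use fin in auto)
  then show ?thesis using e by simp
qed

lemma drop_one_zf:
  assumes sg: "simple_graph n E" and full: "zf_closure n E SG = {..<n}"
    and v: "v \<in> SG" "v < n" "nbrs n E v \<subseteq> SG" and x: "E v x" and SGn: "SG \<subseteq> {..<n}"
  shows "zf_closure n E (SG - {x}) = {..<n}"
proof -
  note xi = nbr_in[OF sg x]
  have "SG \<subseteq> zf_closure n E (SG - {x})"
  proof
    fix y assume y: "y \<in> SG"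
    show "y \<in> zf_closure n E (SG - {x})"
    proof (cases "y = x")
      case False then show ?thesis using y SGn by (intro zf_closure.init) auto
    next
      case True
      show ?thesis unfolding True
      proof (rule zf_closure.force[of v])
        show "v \<in> zf_closure n E (SG - {x})" using v xi by (intro zf_closure.init) auto
        show "x \<in> nbrs n E v" using xi by simp
        show "\<forall>z\<in>nbrs n E v. z \<noteq> x \<longrightarrow> z \<in> zf_closure n E (SG - {x})"
        proof (intro ballI impI)
          fix z assume z: "z \<in> nbrs n E v" "z \<noteq> x"
          then have "z \<in> SG" "z < n" using v(3) by (auto simp: nbrs_def)
          then show "z \<in> zf_closure n E (SG - {x})" using z(2) by (intro zf_closure.init) auto
        qed
      qed
    qed
  qed
  then have "zf_closure n E SG \<subseteq> zf_closure n E (SG - {x})" by (rule zf_absorb)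
  then show ?thesis using full zf_sub by blast
qed

lemma drop_one_szf:
  assumes sg: "simple_graph n E" and full: "szf_closure n E SG = {..<n}"
    and v: "v < n" "nbrs n E v \<subseteq> SG" and x: "E v x" and SGn: "SG \<subseteq> {..<n}"
  shows "szf_closure n E (SG - {x}) = {..<n}"
proof -
  note xi = nbr_in[OF sg x]
  have "SG \<subseteq> szf_closure n E (SG - {x})"
  proof
    fix y assume y: "y \<in> SG"
    show "y \<in> szf_closure n E (SG - {x})"
    proof (cases "y = x")
      case False then show ?thesis using y SGn by (intro szf_closure.init) auto
    next
      case True
      show ?thesis unfolding True
      proof (rule szf_closure.force[of v])
        show "v < n" using v by simp
        show "x \<in> nbrs n E v" using xi by simp
        show "\<forall>z\<in>nbrs n E v. z \<noteq> x \<longrightarrow> z \<in> szf_closure n E (SG - {x})"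
        proof (intro ballI impI)
          fix z assume z: "z \<in> nbrs n E v" "z \<noteq> x"
          then have "z \<in> SG" "z < n" using v(2) by (auto simp: nbrs_def)
          then show "z \<in> szf_closure n E (SG - {x})" using z(2) by (intro szf_closure.init) auto
        qed
      qed
    qed
  qed
  then have "szf_closure n E SG \<subseteq> szf_closure n E (SG - {x})" by (rule szf_absorb)
  then show ?thesis using full szf_sub by blast
qed

lemma lower_zf:
  assumes sg: "simple_graph n E" and hn: "has_nbr n E" and n0: "0 < n"
    and S: "S \<subseteq> {..<n+r}" and full: "zf_closure (n+r) (JW n E r) S = {..<n+r}"
  shows "\<exists>T. T \<subseteq> {..<n} \<and> zf_closure n E T = {..<n} \<and> card T + r \<le> card S"
proof -
  define SG where "SG = S \<inter> {..<n}"
  have cS: "card S = card SG + card (S \<inter> {n..<n+r})" unfolding SG_def by (rule card_split[OF S])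
  have SGn: "SG \<subseteq> {..<n}" unfolding SG_def by blast
  show ?thesis
  proof (cases "{n..<n+r} \<subseteq> S")
    case True
    then have "S \<inter> {n..<n+r} = {n..<n+r}" by blast
    then have "card SG + r = card S" using cS by simp
    moreover have "zf_closure n E SG = {..<n}" unfolding SG_def by (rule lemA_zf[OF sg hn True full])
    ultimately show ?thesis using SGn by (intro exI[of _ SG]) simp
  next
    case False
    then obtain a where a: "a \<in> {n..<n+r}" "a \<notin> S" by blast
    show ?thesis
    proof (cases "{n..<n+r} - {a} \<subseteq> S \<and> (\<exists>v\<in>S. v < n \<and> nbrs n E v \<subseteq> S)")
      case True
      then obtain v where v: "v \<in> S" "v < n" "nbrs n E v \<subseteq> S" and Ka: "{n..<n+r} - {a} \<subseteq> S" by blast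
      have "zf_closure (n+r) (JW n E r) S \<subseteq> zf_closure (n+r) (JW n E r) (S \<union> {n..<n+r})"
        by (rule zf_mono) blast
      then have "zf_closure (n+r) (JW n E r) (S \<union> {n..<n+r}) = {..<n+r}"
        using zf_sub full by blast
      from lemA_zf[OF sg hn _ this] have "zf_closure n E ((S \<union> {n..<n+r}) \<inter> {..<n}) = {..<n}" by blast
      moreover have "(S \<union> {n..<n+r}) \<inter> {..<n} = SG" unfolding SG_def by auto
      ultimately have fG: "zf_closure n E SG = {..<n}" by simp
      obtain x where x: "E v x" using hn v(2) unfolding has_nbr_def by blast
      note xi = nbr_in[OF sg x]
      have vSG: "nbrs n E v \<subseteq> SG" using v(3) unfolding SG_def nbrs_def by blast
      have xSG: "x \<in> SG" using vSG xi(4) by blast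
      have vS: "v \<in> SG" using v unfolding SG_def by simp
      have T: "zf_closure n E (SG - {x}) = {..<n}"
        by (rule drop_one_zf[OF sg fG vS v(2) vSG x SGn])
      have "S \<inter> {n..<n+r} = {n..<n+r} - {a}" using Ka a by blast
      then have c1: "card (S \<inter> {n..<n+r}) = r - 1" using a by simp
      have finSG: "finite SG" using SGn finite_subset by blast
      have c2: "card (SG - {x}) = card SG - 1" using xSG finSG by simp
      have "SG \<noteq> {}" using xSG by blast
      then have c3: "card SG \<ge> 1" using finSG by (simp add: Suc_le_eq card_gt_0_iff)
      have "r \<ge> 1" using a by simp
      then have "card (SG - {x}) + r \<le> card S" using cS c1 c2 c3 by linarith
      moreover have "SG - {x} \<subseteq> {..<n}" using SGn by blast
      ultimately show ?thesis using T by (intro exI[of _ "SG - {x}"]) simp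
    next
      case nP: False
      have "\<exists>y<n+r. y \<notin> S \<and> y \<noteq> a"
      proof (cases "{n..<n+r} - {a} \<subseteq> S")
        case False then show ?thesis by auto
      next
        case True
        with nP have nv: "\<not> (\<exists>v\<in>S. v < n \<and> nbrs n E v \<subseteq> S)" by blast
        show ?thesis
        proof (rule ccontr)
          assume na: "\<not> ?thesis"
          have all: "{..<n} \<subseteq> S"
          proof
            fix x assume "x \<in> {..<n}"
            then have "x < n + r" "x \<noteq> a" using a by auto
            then show "x \<in> S" using na by blast
          qed
          have z: "0 \<in> S" using all n0 by auto
          have "nbrs n E 0 \<subseteq> S" using all by (auto simp: nbrs_def)
          then show False using nv n0 z by blast
        qed
      qed
      then obtain y where y: "y < n + r" "y \<notin> S" "y \<noteq> a" by blast
      have stuck: "z \<in> S" if "z \<in> zf_closure (n+r) (JW n E r) S" for z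
        using that
      proof induction
        case (init v) then show ?case by simp
      next
        case (force u w)
        have oth: "x \<in> S" if "x \<in> nbrs (n+r) (JW n E r) u" "x \<noteq> w" for x
          using force(4) that by blast
        have uS: "u \<in> S" using force(3) .
        have uN: "u < n + r" using force(1) zf_sub by blast
        show ?case
        proof (rule ccontr)
          assume wS: "w \<notin> S"
          show False
          proof (cases "u < n")
            case un: True
            note nb = nbrs_JW_lo[OF sg un, of r]
            have "a \<in> nbrs (n+r) (JW n E r) u" using nb a by simp
            then have wa: "w = a" using oth a(2) by blast
            have Ka: "{n..<n+r} - {a} \<subseteq> S"
            proof
              fix b assume b: "b \<in> {n..<n+r} - {a}"
              then have "b \<in> nbrs (n+r) (JW n E r) u" using nb by simp
              then show "b \<in> S" using oth b wa by blast
            qed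
            with nP have "\<not> nbrs n E u \<subseteq> S" using uS un by blast
            then obtain x where x: "x \<in> nbrs n E u" "x \<notin> S" by blast
            then have "x \<in> nbrs (n+r) (JW n E r) u" "x \<noteq> w" using nb wa a by (auto simp: nbrs_def)
            then show False using oth x(2) by blast
          next
            case un: False
            note nb = nbrs_JW_hi[of n u r E, OF _ uN]
            have "a \<noteq> u" using a uS by blast
            then have "a \<in> nbrs (n+r) (JW n E r) u" using nb un a by simp
            then have wa: "w = a" using oth a(2) by blast
            have "y \<noteq> u" using y uS by blast
            then have "y \<in> nbrs (n+r) (JW n E r) u" using nb un y by simp
            then show False using oth y wa by blast
          qed
        qed
      qed
      have "a \<in> zf_closure (n+r) (JW n E r) S" using full a by simp
      then show ?thesis using stuck a by blast
    qed
  qed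
qed

lemma lower_szf:
  assumes sg: "simple_graph n E" and hn: "has_nbr n E" and n0: "0 < n"
    and S: "S \<subseteq> {..<n+r}" and full: "szf_closure (n+r) (JW n E r) S = {..<n+r}"
  shows "\<exists>T. T \<subseteq> {..<n} \<and> szf_closure n E T = {..<n} \<and> card T + r \<le> card S"
proof -
  define SG where "SG = S \<inter> {..<n}"
  have cS: "card S = card SG + card (S \<inter> {n..<n+r})" unfolding SG_def by (rule card_split[OF S])
  have SGn: "SG \<subseteq> {..<n}" unfolding SG_def by blast
  have finS: "finite S" using S finite_subset by blast
  show ?thesis
  proof (cases "n + r \<le> card S + 2")
    case big: True
    obtain x where x: "E 0 x" using hn n0 unfolding has_nbr_def by blast
    note xi = nbr_in[OF sg x]
    have x0: "E x 0" using x sg unfolding simple_graph_def by simp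
    define T where "T = {..<n} - {0, x}"
    have xin: "x \<in> szf_closure n E T"
    proof (rule szf_closure.force[of 0])
      show "0 < n" using n0 .
      show "x \<in> nbrs n E 0" using xi by simp
      show "\<forall>z\<in>nbrs n E 0. z \<noteq> x \<longrightarrow> z \<in> szf_closure n E T"
      proof (intro ballI impI)
        fix z assume z: "z \<in> nbrs n E 0" "z \<noteq> x"
        then have "E 0 z" "z < n" by (auto simp: nbrs_def)
        have "z \<noteq> 0"
        proof
          assume "z = 0" then have "E 0 0" using \<open>E 0 z\<close> by simp
          then show False using sg unfolding simple_graph_def by blast
        qed
        then show "z \<in> szf_closure n E T" using z(2) \<open>z < n\<close> by (intro szf_closure.init) (auto simp: T_def)
      qed
    qed
    have zin: "0 \<in> szf_closure n E T"
    proof (rule szf_closure.force[of x])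
      show "x < n" using xi by simp
      show "0 \<in> nbrs n E x" using x0 n0 by (simp add: nbrs_def)
      show "\<forall>z\<in>nbrs n E x. z \<noteq> 0 \<longrightarrow> z \<in> szf_closure n E T"
      proof (intro ballI impI)
        fix z assume z: "z \<in> nbrs n E x" "z \<noteq> 0"
        then have "E x z" "z < n" by (auto simp: nbrs_def)
        have "z \<noteq> x"
        proof
          assume "z = x" then have "E x x" using \<open>E x z\<close> by simp
          then show False using sg unfolding simple_graph_def by blast
        qed
        then show "z \<in> szf_closure n E T" using z(2) \<open>z < n\<close> by (intro szf_closure.init) (auto simp: T_def)
      qed
    qed
    have TT: "szf_closure n E T = {..<n}"
    proof
      show "szf_closure n E T \<subseteq> {..<n}" by (rule szf_sub)
      show "{..<n} \<subseteq> szf_closure n E T"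
      proof
        fix z assume z: "z \<in> {..<n}"
        show "z \<in> szf_closure n E T"
        proof (cases "z = 0 \<or> z = x")
          case True then show ?thesis using xin zin by blast
        next
          case False then show ?thesis using z by (intro szf_closure.init) (auto simp: T_def)
        qed
      qed
    qed
    have sub2: "{0, x} \<subseteq> {..<n}" using n0 xi(1) by simp
    have c2: "card {0, x} = 2" using xi(3) by simp
    have "card T = n - 2" unfolding T_def using card_Diff_subset[OF _ sub2] c2 by simp
    moreover have "n \<ge> 2" using xi(1,3) by linarith
    ultimately have "card T + r \<le> card S" using big by linarith
    moreover have "T \<subseteq> {..<n}" unfolding T_def by blast
    ultimately show ?thesis using TT by (intro exI[of _ T]) simp
  next
    case small: False
    show ?thesis
    proof (cases "{n..<n+r} \<subseteq> S")
      case True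
      then have "S \<inter> {n..<n+r} = {n..<n+r}" by blast
      then have "card SG + r = card S" using cS by simp
      moreover have "szf_closure n E SG = {..<n}" unfolding SG_def by (rule lemA_szf[OF sg hn True full])
      ultimately show ?thesis using SGn by (intro exI[of _ SG]) simp
    next
      case False
      then obtain a where a: "a \<in> {n..<n+r}" "a \<notin> S" by blast
      show ?thesis
      proof (cases "{n..<n+r} - {a} \<subseteq> S \<and> (\<exists>v<n. nbrs n E v \<subseteq> S)")
        case True
        then obtain v where v: "v < n" "nbrs n E v \<subseteq> S" and Ka: "{n..<n+r} - {a} \<subseteq> S" by blast
        have "szf_closure (n+r) (JW n E r) S \<subseteq> szf_closure (n+r) (JW n E r) (S \<union> {n..<n+r})"
          by (rule szf_mono) blast
        then have "szf_closure (n+r) (JW n E r) (S \<union> {n..<n+r}) = {..<n+r}"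
          using szf_sub full by blast
        from lemA_szf[OF sg hn _ this] have "szf_closure n E ((S \<union> {n..<n+r}) \<inter> {..<n}) = {..<n}" by blast
        moreover have "(S \<union> {n..<n+r}) \<inter> {..<n} = SG" unfolding SG_def by auto
        ultimately have fG: "szf_closure n E SG = {..<n}" by simp
        obtain x where x: "E v x" using hn v(1) unfolding has_nbr_def by blast
        note xi = nbr_in[OF sg x]
        have vSG: "nbrs n E v \<subseteq> SG" using v(2) unfolding SG_def nbrs_def by blast
        have xSG: "x \<in> SG" using vSG xi(4) by blast
        have T: "szf_closure n E (SG - {x}) = {..<n}"
          by (rule drop_one_szf[OF sg fG v(1) vSG x SGn])
        have "S \<inter> {n..<n+r} = {n..<n+r} - {a}" using Ka a by blast
        then have c1: "card (S \<inter> {n..<n+r}) = r - 1" using a by simp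
        have finSG: "finite SG" using SGn finite_subset by blast
        have c2: "card (SG - {x}) = card SG - 1" using xSG finSG by simp
        have "SG \<noteq> {}" using xSG by blast
        then have c3: "card SG \<ge> 1" using finSG by (simp add: Suc_le_eq card_gt_0_iff)
        have "r \<ge> 1" using a by simp
        then have "card (SG - {x}) + r \<le> card S" using cS c1 c2 c3 by linarith
        moreover have "SG - {x} \<subseteq> {..<n}" using SGn by blast
        ultimately show ?thesis using T by (intro exI[of _ "SG - {x}"]) simp
      next
        case nP: False
        have cW: "card ({..<n+r} - S) \<ge> 3"
        proof -
          have "card ({..<n+r} - S) = n + r - card S" using S finS by (simp add: card_Diff_subset)
          then show ?thesis using small by linarith
        qed
        have stuck: "z \<in> S" if "z \<in> szf_closure (n+r) (JW n E r) S" for z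
          using that
        proof induction
          case (init v) then show ?case by simp
        next
          case (force u w)
          have oth: "x \<in> S" if "x \<in> nbrs (n+r) (JW n E r) u" "x \<noteq> w" for x
            using force(3) that by blast
          have uN: "u < n + r" using force(1) .
          show ?case
          proof (rule ccontr)
            assume wS: "w \<notin> S"
            show False
            proof (cases "u < n")
              case un: True
              note nb = nbrs_JW_lo[OF sg un, of r]
              have "a \<in> nbrs (n+r) (JW n E r) u" using nb a by simp
              then have wa: "w = a" using oth a(2) by blast
              have Ka: "{n..<n+r} - {a} \<subseteq> S"
              proof
                fix b assume b: "b \<in> {n..<n+r} - {a}"
                then have "b \<in> nbrs (n+r) (JW n E r) u" using nb by simp
                then show "b \<in> S" using oth b wa by blast
              qed
              with nP have "\<not> nbrs n E u \<subseteq> S" using un by blast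
              then obtain x where x: "x \<in> nbrs n E u" "x \<notin> S" by blast
              then have "x \<in> nbrs (n+r) (JW n E r) u" "x \<noteq> w" using nb wa a by (auto simp: nbrs_def)
              then show False using oth x(2) by blast
            next
              case un: False
              note nb = nbrs_JW_hi[of n u r E, OF _ uN]
              have "{..<n+r} - S \<subseteq> {u, w}"
              proof
                fix y assume y: "y \<in> {..<n+r} - S"
                show "y \<in> {u, w}"
                proof (rule ccontr)
                  assume "y \<notin> {u, w}"
                  then have "y \<in> nbrs (n+r) (JW n E r) u" "y \<noteq> w" using nb un y by auto
                  then show False using oth y by blast
                qed
              qed
              then have "card ({..<n+r} - S) \<le> card {u, w}" by (intro card_mono) auto
              also have "\<dots> \<le> 2" by (simp add: card_insert_le_m1)
              finally show False using cW by simp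
            qed
          qed
        qed
        have "a \<in> szf_closure (n+r) (JW n E r) S" using full a by simp
        then show ?thesis using stuck a by blast
      qed
    qed
  qed
qed

lemma Z_le: "S \<subseteq> {..<n} \<Longrightarrow> zf_closure n E S = {..<n} \<Longrightarrow> zero_forcing_number n E \<le> card S"
  unfolding zero_forcing_number_def by (rule Least_le) auto

lemma SZ_le: "S \<subseteq> {..<n} \<Longrightarrow> szf_closure n E S = {..<n} \<Longrightarrow> skew_zero_forcing_number n E \<le> card S"
  unfolding skew_zero_forcing_number_def by (rule Least_le) auto

lemma Z_ex: "\<exists>S. S \<subseteq> {..<n} \<and> card S = zero_forcing_number n E \<and> zf_closure n E S = {..<n}"
proof -
  have "zf_closure n E {..<n} = {..<n}" using zf_sub by (auto intro: zf_closure.init)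
  then have "\<exists>k S. S \<subseteq> {..<n} \<and> card S = k \<and> zf_closure n E S = {..<n}" by blast
  then show ?thesis unfolding zero_forcing_number_def by (rule LeastI_ex)
qed

lemma SZ_ex: "\<exists>S. S \<subseteq> {..<n} \<and> card S = skew_zero_forcing_number n E \<and> szf_closure n E S = {..<n}"
proof -
  have "szf_closure n E {..<n} = {..<n}" using szf_sub by (auto intro: szf_closure.init)
  then have "\<exists>k S. S \<subseteq> {..<n} \<and> card S = k \<and> szf_closure n E S = {..<n}" by blast
  then show ?thesis unfolding skew_zero_forcing_number_def by (rule LeastI_ex)
qed

lemma Z_join:
  assumes sg: "simple_graph n E" and hn: "has_nbr n E" and n0: "0 < n"
  shows "zero_forcing_number (n+r) (JW n E r) = zero_forcing_number n E + r"
proof (rule antisym)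
  obtain T where T: "T \<subseteq> {..<n}" "card T = zero_forcing_number n E" "zf_closure n E T = {..<n}"
    using Z_ex by blast
  have "card (T \<union> {n..<n+r}) = card T + r"
    using T(1) by (subst card_Un_disjoint) (auto intro: finite_subset)
  moreover have "zero_forcing_number (n+r) (JW n E r) \<le> card (T \<union> {n..<n+r})"
    by (rule Z_le) (use T(1) upper_zf[OF sg T(3)] in auto)
  ultimately show "zero_forcing_number (n+r) (JW n E r) \<le> zero_forcing_number n E + r" using T by simp
next
  obtain S where S: "S \<subseteq> {..<n+r}" "card S = zero_forcing_number (n+r) (JW n E r)"
    "zf_closure (n+r) (JW n E r) S = {..<n+r}"
    using Z_ex by blast
  from lower_zf[OF sg hn n0 S(1) S(3)] obtain T where
    "T \<subseteq> {..<n}" "zf_closure n E T = {..<n}" "card T + r \<le> card S" by blast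
  then show "zero_forcing_number n E + r \<le> zero_forcing_number (n+r) (JW n E r)"
    using Z_le[of T n E] S(2) by simp
qed

lemma SZ_join:
  assumes sg: "simple_graph n E" and hn: "has_nbr n E" and n0: "0 < n"
  shows "skew_zero_forcing_number (n+r) (JW n E r) = skew_zero_forcing_number n E + r"
proof (rule antisym)
  obtain T where T: "T \<subseteq> {..<n}" "card T = skew_zero_forcing_number n E" "szf_closure n E T = {..<n}"
    using SZ_ex by blast
  have "card (T \<union> {n..<n+r}) = card T + r"
    using T(1) by (subst card_Un_disjoint) (auto intro: finite_subset)
  moreover have "skew_zero_forcing_number (n+r) (JW n E r) \<le> card (T \<union> {n..<n+r})"
    by (rule SZ_le) (use T(1) upper_szf[OF sg T(3)] in auto)
  ultimately show "skew_zero_forcing_number (n+r) (JW n E r) \<le> skew_zero_forcing_number n E + r" using T by simp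
next
  obtain S where S: "S \<subseteq> {..<n+r}" "card S = skew_zero_forcing_number (n+r) (JW n E r)"
    "szf_closure (n+r) (JW n E r) S = {..<n+r}"
    using SZ_ex by blast
  from lower_szf[OF sg hn n0 S(1) S(3)] obtain T where
    "T \<subseteq> {..<n}" "szf_closure n E T = {..<n}" "card T + r \<le> card S" by blast
  then show "skew_zero_forcing_number n E + r \<le> skew_zero_forcing_number (n+r) (JW n E r)"
    using SZ_le[of T n E] S(2) by simp
qed

lemma nbrs_one: assumes "simple_graph 1 E" shows "nbrs 1 E = (\<lambda>_. {})"
  using assms unfolding nbrs_def simple_graph_def by fastforce

lemma one_same:
  assumes "simple_graph 1 E1" "simple_graph 1 E2"
  shows "zero_forcing_number 1 E1 = zero_forcing_number 1 E2"
    "skew_zero_forcing_number 1 E1 = skew_zero_forcing_number 1 E2"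
proof -
  have e: "nbrs 1 E1 = nbrs 1 E2" using nbrs_one[OF assms(1)] nbrs_one[OF assms(2)] by simp
  have "zf_closure 1 E1 = zf_closure 1 E2"
    using zf_cong[OF e] zf_cong[OF e[symmetric]] by blast
  then show "zero_forcing_number 1 E1 = zero_forcing_number 1 E2" unfolding zero_forcing_number_def by simp
  have "szf_closure 1 E1 = szf_closure 1 E2"
    using szf_cong[OF e] szf_cong[OF e[symmetric]] by blast
  then show "skew_zero_forcing_number 1 E1 = skew_zero_forcing_number 1 E2" unfolding skew_zero_forcing_number_def by simp
qed

theorem proposition4p4:
  fixes n1 n2 :: nat and E1 E2 :: "nat \<Rightarrow> nat \<Rightarrow> bool"
  assumes "simple_graph n1 E1" and "simple_graph n2 E2"
    and "connected_graph n1 E1" and "connected_graph n2 E2"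
    and "laplacian_cospectral n1 E1 n2 E2"
  shows "(zero_forcing_number n1 E1 \<noteq> zero_forcing_number n2 E2 \<longrightarrow>
            (\<forall>r::nat. r \<ge> 1 \<longrightarrow>
               laplacian_cospectral (n1 + r) (join_adj n1 E1 r (complete_graph_adj r))
                                    (n2 + r) (join_adj n2 E2 r (complete_graph_adj r)) \<and>
               zero_forcing_number (n1 + r) (join_adj n1 E1 r (complete_graph_adj r)) \<noteq>
               zero_forcing_number (n2 + r) (join_adj n2 E2 r (complete_graph_adj r)))) \<and>
         (skew_zero_forcing_number n1 E1 \<noteq> skew_zero_forcing_number n2 E2 \<longrightarrow>
            (\<forall>r::nat. r \<ge> 1 \<longrightarrow>
               laplacian_cospectral (n1 + r) (join_adj n1 E1 r (complete_graph_adj r))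
                                    (n2 + r) (join_adj n2 E2 r (complete_graph_adj r)) \<and>
               skew_zero_forcing_number (n1 + r) (join_adj n1 E1 r (complete_graph_adj r)) \<noteq>
               skew_zero_forcing_number (n2 + r) (join_adj n2 E2 r (complete_graph_adj r))))"
proof -
  have n: "n1 = n2" using cospec_imp[OF assms(5)] by simp
  have n0: "0 < n1" using assms(3) unfolding connected_graph_def by simp
  have jc: "\<And>r. laplacian_cospectral (n1 + r) (JW n1 E1 r) (n2 + r) (JW n2 E2 r)"
    by (rule join_cospectral[OF assms(1,2,5)])
  consider (one) "n1 = 1" | (two) "2 \<le> n1" using n0 by linarith
  then show ?thesis
  proof cases
    case one
    then have sg1: "simple_graph 1 E1" and sg2: "simple_graph 1 E2" using assms(1,2) n by simp_all
    have "zero_forcing_number 1 E1 = zero_forcing_number 1 E2"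
      "skew_zero_forcing_number 1 E1 = skew_zero_forcing_number 1 E2"
      using one_same[OF sg1 sg2] by simp_all
    then show ?thesis using one n by simp
  next
    case two
    have h1: "has_nbr n1 E1" by (rule conn_has_nbr[OF assms(1,3) two])
    have two2: "2 \<le> n2" using two n by simp
    have h2: "has_nbr n2 E2" by (rule conn_has_nbr[OF assms(2,4) two2])
    have n02: "0 < n2" using two2 by simp
    have z1: "\<And>r. zero_forcing_number (n1+r) (JW n1 E1 r) = zero_forcing_number n1 E1 + r"
      by (rule Z_join[OF assms(1) h1 n0])
    have z2: "\<And>r. zero_forcing_number (n2+r) (JW n2 E2 r) = zero_forcing_number n2 E2 + r"
      by (rule Z_join[OF assms(2) h2 n02])
    have s1: "\<And>r. skew_zero_forcing_number (n1+r) (JW n1 E1 r) = skew_zero_forcing_number n1 E1 + r"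
      by (rule SZ_join[OF assms(1) h1 n0])
    have s2: "\<And>r. skew_zero_forcing_number (n2+r) (JW n2 E2 r) = skew_zero_forcing_number n2 E2 + r"
      by (rule SZ_join[OF assms(2) h2 n02])
    show ?thesis unfolding z1 z2 s1 s2 using jc by simp
  qed
qed


end
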